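(* Let $k\ge2$, $1\le m<k$, and alternatives $\ell=1,\dots,k$ with i.i.d. replications (independent across alternatives) whose means are pairwise distinct and ordered $\mu_{\langle 1\rangle}>\dots>\mu_{\langle k\rangle}$, satisfying Assumptions 1–4 of the context, and let $G_{ij}$ be as in the context. Let $r^*=(r^*_{\langle1\rangle},\dots,r^*_{\langle k\rangle})$ be an optimal solution of maximize $\min_{i\in\{1,\dots,m\},j\in\{m+1,\dots,k\}}G_{ij}(r_{\langle i\rangle},r_{\langle j\rangle})$ subject to $\sum_{\ell=1}^kr_{\langle\ell\rangle}=1$, $r_{\langle\ell\rangle}\ge0$. Then for all $h\in\{1,\dots,m\}$ and $\ell\in\{m+1,\dots,k\}$, $\min_{j\in\{m+1,\dots,k\}}G_{hj}(r^*_{\langle h\rangle},r^*_{\langle j\rangle})=\min_{i\in\{1,\dots,m\}}G_{i\ell}(r^*_{\langle i\rangle},r^*_{\langle \ell\rangle})$.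
   Context: $G_{ij}(r_{\langle i\rangle},r_{\langle j\rangle})=\inf_{x\in\mathbb R}\big(r_{\langle i\rangle}\Lambda^*_{\langle i\rangle}(x)+r_{\langle j\rangle}\Lambda^*_{\langle j\rangle}(x)\big)$ (the large deviations rate of the event $\bar X_{\langle j\rangle}(r_{\langle j\rangle}T)\ge\bar X_{\langle i\rangle}(r_{\langle i\rangle}T)$), where $\Lambda^*_\ell(x)=\sup_\lambda\{\lambda x-\Lambda_\ell(\lambda)\}$. $\bar X_\ell(n)$ is the sample mean of $n$ replications of alternative $\ell$, $\Lambda^{(n)}_\ell(\lambda)=\log\mathbb E[e^{\lambda\bar X_\ell(n)}]$. Assumption 1: $\Lambda_\ell(\lambda)=\lim_{n\to\infty}\frac1n\Lambda^{(n)}_\ell(n\lambda)$ exists as an extended real number for all $\lambda$. With $\mathcal D_{\Lambda_\ell}=\{\lambda:\Lambda_\ell(\lambda)<\infty\}$, interior $\mathcal D^o_{\Lambda_\ell}$, and $\mathcal F_\ell=\{\Lambda'_\ell(\lambda):\lambda\in\mathcal D^o_{\Lambda_\ell}\}$, interior $\mathcal F^o_\ell$: Assumption 2: $0\in\mathcal D^o_{\Lambda_\ell}$. Assumption 3: $\Lambda_\ell$ strictly convex, continuous on $\mathcal D^o_{\Lambda_\ell}$ and steep. Assumption 4: $[\mu_{\langle k\rangle},\mu_{\langle1\rangle}]\subset\bigcap_\ell\mathcal F^o_\ell$. *)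

theory Defs
  imports "HOL-Probability.Probability"
begin

text \<open>M is the distribution (a probability measure on the reals) of a single replication
 of an alternative.  Replications are i.i.d., so n replications are distributed as the
 product measure PiM {..<n} (\<lambda>_. M).\<close>

definition cgf_n :: "real measure \<Rightarrow> nat \<Rightarrow> real \<Rightarrow> ereal" where
  "cgf_n M n lam =
     (let I = (\<integral>\<^sup>+ x. ennreal (exp (lam * ((\<Sum>i<n. x i) / real n))) \<partial>(PiM {..<n} (\<lambda>_. M)))
      in if I = \<top> then \<infinity> else ereal (ln (enn2real I)))"

definition scaled_cgf :: "real measure \<Rightarrow> real \<Rightarrow> nat \<Rightarrow> ereal" where
  "scaled_cgf M lam n = cgf_n M n (real n * lam) / ereal (real n)"

definition assumption1 :: "real measure \<Rightarrow> bool" where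
  "assumption1 M \<longleftrightarrow> (\<forall>lam. convergent (scaled_cgf M lam))"

definition Lambda :: "real measure \<Rightarrow> real \<Rightarrow> ereal" where
  "Lambda M lam = lim (scaled_cgf M lam)"

definition Lambda_real :: "real measure \<Rightarrow> real \<Rightarrow> real" where
  "Lambda_real M lam = real_of_ereal (Lambda M lam)"

definition dom_Lambda :: "real measure \<Rightarrow> real set" where
  "dom_Lambda M = {lam. Lambda M lam < \<infinity>}"

definition F_set :: "real measure \<Rightarrow> real set" where
  "F_set M = (\<lambda>lam. deriv (Lambda_real M) lam) ` interior (dom_Lambda M)"

definition strictly_convex_on :: "real set \<Rightarrow> (real \<Rightarrow> real) \<Rightarrow> bool" where
  "strictly_convex_on S f \<longleftrightarrow> convex S \<and>
     (\<forall>x\<in>S. \<forall>y\<in>S. \<forall>t. x \<noteq> y \<longrightarrow> 0 < t \<longrightarrow> t < 1 \<longrightarrow>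
        f ((1 - t) * x + t * y) < (1 - t) * f x + t * f y)"

definition steep :: "real measure \<Rightarrow> bool" where
  "steep M \<longleftrightarrow>
     (\<forall>lam\<in>interior (dom_Lambda M). Lambda_real M differentiable (at lam)) \<and>
     (\<forall>s b. b \<in> frontier (interior (dom_Lambda M)) \<longrightarrow>
        (\<forall>n. s n \<in> interior (dom_Lambda M)) \<longrightarrow> s \<longlonglongrightarrow> b \<longrightarrow>
        filterlim (\<lambda>n. \<bar>deriv (Lambda_real M) (s n)\<bar>) at_top sequentially)"

definition assumption2 :: "real measure \<Rightarrow> bool" where
  "assumption2 M \<longleftrightarrow> 0 \<in> interior (dom_Lambda M)"

definition assumption3 :: "real measure \<Rightarrow> bool" where
  "assumption3 M \<longleftrightarrow> strictly_convex_on (dom_Lambda M) (Lambda_real M) \<and>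
     continuous_on (interior (dom_Lambda M)) (Lambda_real M) \<and> steep M"

definition rate :: "real measure \<Rightarrow> real \<Rightarrow> ereal" where
  "rate M x = (SUP lam. ereal (lam * x) - Lambda M lam)"

definition G :: "(nat \<Rightarrow> real measure) \<Rightarrow> nat \<Rightarrow> nat \<Rightarrow> real \<Rightarrow> real \<Rightarrow> ereal" where
  "G M i j a b = (INF x. ereal a * rate (M i) x + ereal b * rate (M j) x)"

definition objective :: "(nat \<Rightarrow> real measure) \<Rightarrow> nat \<Rightarrow> nat \<Rightarrow> (nat \<Rightarrow> real) \<Rightarrow> ereal" where
  "objective M k m r = (INF p\<in>{1..m} \<times> {m+1..k}. G M (fst p) (snd p) (r (fst p)) (r (snd p)))"

definition alloc_simplex :: "nat \<Rightarrow> (nat \<Rightarrow> real) set" where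
  "alloc_simplex k = {r. (\<Sum>l=1..k. r l) = 1 \<and> (\<forall>l\<in>{1..k}. r l \<ge> 0)}"

end

theory Submission imports Defs begin

lemma enn2real_pow: "enn2real (x ^ n) = enn2real x ^ n"
  by (induction n) (auto simp: enn2real_mult)

lemma scaled_cgf_eq:
  assumes N: "prob_space N" and B: "sets N = sets borel" and n: "n > 0"
  shows "scaled_cgf N lam n =
    (if (\<integral>\<^sup>+x. ennreal (exp (lam * x)) \<partial>N) = \<top> then \<infinity>
     else ereal (ln (enn2real (\<integral>\<^sup>+x. ennreal (exp (lam * x)) \<partial>N))))"
proof -
  interpret N: prob_space N by (rule N)
  interpret P: product_sigma_finite "\<lambda>_. N"
    unfolding product_sigma_finite_def by (simp add: N.sigma_finite_measure_axioms)
  define I where "I = (\<integral>\<^sup>+x. ennreal (exp (lam * x)) \<partial>N)"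
  have meas: "(\<lambda>x. ennreal (exp (lam * x))) \<in> borel_measurable N"
    using B by (simp add: measurable_cong_sets[OF B refl])
  have "(\<integral>\<^sup>+ x. ennreal (exp (real n * lam * ((\<Sum>i<n. x i) / real n))) \<partial>(PiM {..<n} (\<lambda>_. N)))
     = (\<integral>\<^sup>+ x. (\<Prod>i<n. ennreal (exp (lam * x i))) \<partial>(PiM {..<n} (\<lambda>_. N)))"
  proof (rule nn_integral_cong)
    fix x :: "nat \<Rightarrow> real"
    have "real n * lam * ((\<Sum>i<n. x i) / real n) = (\<Sum>i<n. lam * x i)"
    proof -
      have "real n * lam * ((\<Sum>i<n. x i) / real n) = lam * (\<Sum>i<n. x i)" using n by simp
      then show ?thesis by (simp add: sum_distrib_left)
    qed
    then show "ennreal (exp (real n * lam * ((\<Sum>i<n. x i) / real n))) = (\<Prod>i<n. ennreal (exp (lam * x i)))"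
      by (simp add: exp_sum prod_ennreal)
  qed
  also have "\<dots> = (\<Prod>i<n. I)"
    unfolding I_def by (rule P.product_nn_integral_prod) (auto simp: meas)
  also have "\<dots> = I ^ n" by simp
  finally have eq: "(\<integral>\<^sup>+ x. ennreal (exp (real n * lam * ((\<Sum>i<n. x i) / real n))) \<partial>(PiM {..<n} (\<lambda>_. N))) = I ^ n" .
  show ?thesis
  proof (cases "I = \<top>")
    case True
    then have "I ^ n = \<top>" using n by (simp add: power_eq_top_ennreal_iff)
    then show ?thesis using True n unfolding scaled_cgf_def cgf_n_def eq I_def[symmetric] Let_def
      by simp
  next
    case False
    then have "I ^ n \<noteq> \<top>" by (simp add: power_eq_top_ennreal_iff)
    moreover have "ln (enn2real (I ^ n)) = real n * ln (enn2real I)"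
      by (cases "enn2real I = 0") (auto simp: enn2real_pow ln_realpow enn2real_nonneg)
    ultimately show ?thesis using False n unfolding scaled_cgf_def cgf_n_def eq I_def[symmetric] Let_def
      by simp
  qed
qed

lemma Lambda_eq:
  assumes N: "prob_space N" and B: "sets N = sets borel"
  shows "Lambda N lam =
    (if (\<integral>\<^sup>+x. ennreal (exp (lam * x)) \<partial>N) = \<top> then \<infinity>
     else ereal (ln (enn2real (\<integral>\<^sup>+x. ennreal (exp (lam * x)) \<partial>N))))"
  unfolding Lambda_def
  by (rule limI, rule tendsto_eventually, rule eventually_sequentiallyI[of 1])
     (simp add: scaled_cgf_eq[OF N B])

lemma Lambda_zero:
  assumes N: "prob_space N" and B: "sets N = sets borel"
  shows "Lambda N 0 = 0"
proof -
  interpret N: prob_space N by (rule N)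
  show ?thesis by (simp add: Lambda_eq[OF N B] N.emeasure_space_1)
qed

lemma mgf_ge:
  assumes N: "prob_space N" and B: "sets N = sets borel" and int: "integrable N (\<lambda>x. x)"
  shows "ennreal (exp (lam * (\<integral>x. x \<partial>N))) \<le> (\<integral>\<^sup>+x. ennreal (exp (lam * x)) \<partial>N)"
proof -
  interpret N: prob_space N by (rule N)
  define mu where "mu = (\<integral>x. x \<partial>N)"
  define c where "c = exp (lam * mu)"
  have meas: "(\<lambda>x. exp (lam * x)) \<in> borel_measurable N"
    by (simp add: measurable_cong_sets[OF B refl])
  show ?thesis
  proof (cases "(\<integral>\<^sup>+x. ennreal (exp (lam * x)) \<partial>N) = \<top>")
    case True then show ?thesis by simp
  next
    case False
    then obtain v where v: "(\<integral>\<^sup>+x. ennreal (exp (lam * x)) \<partial>N) = ennreal v"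
      using ennreal_cases by blast
    have ie: "integrable N (\<lambda>x. exp (lam * x))"
      by (rule integrableI_nn_integral_finite[OF meas _ v]) auto
    have eq: "(\<integral>\<^sup>+x. ennreal (exp (lam * x)) \<partial>N) = ennreal (\<integral>x. exp (lam * x) \<partial>N)"
      by (rule nn_integral_eq_integral[OF ie]) auto
    have i2: "integrable N (\<lambda>x. c * (1 + lam * (x - mu)))"
      using int by (intro integrable_mult_right integrable_add integrable_diff) auto
    have h1: "(\<integral>x. c * (1 + lam * (x - mu)) \<partial>N) = c"
      using int by (simp add: mu_def algebra_simps N.prob_space)
    have h2: "(\<integral>x. c * (1 + lam * (x - mu)) \<partial>N) \<le> (\<integral>x. exp (lam * x) \<partial>N)"
    proof (rule integral_mono[OF i2 ie])
      fix x
      have "c * (1 + lam * (x - mu)) \<le> c * exp (lam * (x - mu))"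
        unfolding c_def by (intro mult_left_mono exp_ge_add_one_self) auto
      also have "\<dots> = exp (lam * x)" unfolding c_def by (simp add: exp_add[symmetric] algebra_simps)
      finally show "c * (1 + lam * (x - mu)) \<le> exp (lam * x)" .
    qed
    show ?thesis using h1 h2 unfolding eq c_def mu_def by (simp add: ennreal_leI)
  qed
qed


lemma deriv_facts:
  fixes F :: "real \<Rightarrow> real"
  assumes D: "(F has_real_derivative D) (at 0)" and F0: "F 0 = 0" and e: "e > 0"
    and lb: "\<And>h. \<bar>h\<bar> < e \<Longrightarrow> h * mu \<le> F h"
  shows "(\<forall>c<mu. \<exists>h. -e < h \<and> h < 0 \<and> F h < h * c) \<and> (\<forall>c>mu. \<exists>h. 0 < h \<and> h < e \<and> F h < h * c)"
proof -
  have lim: "((\<lambda>h. F h / h) \<longlongrightarrow> D) (at 0)"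
    using D F0 unfolding DERIV_def by simp
  have limL: "((\<lambda>h. F h / h) \<longlongrightarrow> D) (at_left 0)"
    by (rule tendsto_mono[OF at_le lim]) auto
  have limR: "((\<lambda>h. F h / h) \<longlongrightarrow> D) (at_right 0)"
    by (rule tendsto_mono[OF at_le lim]) auto
  have evL: "eventually (\<lambda>h. h \<in> {-e<..<0}) (at_left (0::real))"
    using e by (intro eventually_at_left_real) auto
  have evR: "eventually (\<lambda>h. h \<in> {0<..<e}) (at_right (0::real))"
    using e by (intro eventually_at_right_real) auto
  have L: "\<exists>h. -e < h \<and> h < 0 \<and> F h < h * c" if "c < D" for c
  proof -
    have "eventually (\<lambda>h. c < F h / h \<and> h \<in> {-e<..<0}) (at_left 0)"
      using order_tendstoD(1)[OF limL that] evL by (rule eventually_conj)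
    then obtain h where h: "c < F h / h" "h \<in> {-e<..<0}"
      using eventually_happens'[OF trivial_limit_at_left_real] by blast
    then have "F h < h * c" by (simp add: pos_less_divide_eq neg_less_divide_eq mult.commute)
    then show ?thesis using h by auto
  qed
  have R: "\<exists>h. 0 < h \<and> h < e \<and> F h < h * c" if "D < c" for c
  proof -
    have "eventually (\<lambda>h. F h / h < c \<and> h \<in> {0<..<e}) (at_right 0)"
      using order_tendstoD(2)[OF limR that] evR by (rule eventually_conj)
    then obtain h where h: "F h / h < c" "h \<in> {0<..<e}"
      using eventually_happens'[OF trivial_limit_at_right_real] by blast
    then have "F h < h * c" by (simp add: pos_divide_less_eq mult.commute)
    then show ?thesis using h by auto
  qed
  have "D = mu"
  proof (rule ccontr)
    assume "D \<noteq> mu"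
    then consider "mu < D" | "D < mu" by linarith
    then show False
    proof cases
      case 1
      then obtain h where "-e < h" "h < 0" "F h < h * mu" using L by blast
      with lb[of h] show False by auto
    next
      case 2
      then obtain h where "0 < h" "h < e" "F h < h * mu" using R by blast
      with lb[of h] show False by auto
    qed
  qed
  then show ?thesis using L R by auto
qed


lemma Lambda_ge:
  assumes N: "prob_space N" and B: "sets N = sets borel" and int: "integrable N (\<lambda>x. x)"
  shows "ereal (lam * (\<integral>x. x \<partial>N)) \<le> Lambda N lam"
proof (cases "(\<integral>\<^sup>+x. ennreal (exp (lam * x)) \<partial>N) = \<top>")
  case True
  then show ?thesis by (simp add: Lambda_eq[OF N B])
next
  case False
  have "ennreal (exp (lam * (\<integral>x. x \<partial>N))) \<le> (\<integral>\<^sup>+x. ennreal (exp (lam * x)) \<partial>N)"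
    by (rule mgf_ge[OF N B int])
  then have "exp (lam * (\<integral>x. x \<partial>N)) \<le> enn2real (\<integral>\<^sup>+x. ennreal (exp (lam * x)) \<partial>N)"
    using False by (metis enn2real_ennreal enn2real_mono exp_ge_zero top.not_eq_extremum)
  then have "lam * (\<integral>x. x \<partial>N) \<le> ln (enn2real (\<integral>\<^sup>+x. ennreal (exp (lam * x)) \<partial>N))"
    by (metis exp_gt_zero exp_le_cancel_iff exp_ln order_less_le_trans)
  then show ?thesis using False by (simp add: Lambda_eq[OF N B])
qed

lemma rate_facts:
  assumes N: "prob_space N" and B: "sets N = sets borel" and int: "integrable N (\<lambda>x. x)"
    and A2: "assumption2 N" and A3: "assumption3 N"
  shows "\<And>x. 0 \<le> rate N x" and "rate N (\<integral>x. x \<partial>N) \<le> 0"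
    and "\<And>c. c < (\<integral>x. x \<partial>N) \<Longrightarrow> \<exists>d>0. \<forall>x\<le>c. ereal d \<le> rate N x"
    and "\<And>c. c > (\<integral>x. x \<partial>N) \<Longrightarrow> \<exists>d>0. \<forall>x\<ge>c. ereal d \<le> rate N x"
proof -
  define mu where "mu = (\<integral>x. x \<partial>N)"
  have ge: "\<And>lam. ereal (lam * mu) \<le> Lambda N lam" unfolding mu_def by (rule Lambda_ge[OF N B int])
  have L0: "Lambda N 0 = 0" by (rule Lambda_zero[OF N B])
  show "0 \<le> rate N x" for x
  proof -
    have "ereal (0 * x) - Lambda N 0 \<le> rate N x" unfolding rate_def by (rule SUP_upper) auto
    then show ?thesis using L0 by (simp add: zero_ereal_def)
  qed
  show "rate N mu \<le> 0" unfolding rate_def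
  proof (rule SUP_least)
    fix lam
    show "ereal (lam * mu) - Lambda N lam \<le> 0"
      using ge[of lam] by (cases "Lambda N lam") auto
  qed
  obtain e where e: "e > 0" "ball 0 e \<subseteq> dom_Lambda N"
    using A2 unfolding assumption2_def mem_interior by blast
  define F where "F = Lambda_real N"
  have fin: "Lambda N h = ereal (F h)" and lbF: "h * mu \<le> F h" if "\<bar>h\<bar> < e" for h
  proof -
    have "h \<in> dom_Lambda N" using e that by auto
    then have "Lambda N h < \<infinity>" unfolding dom_Lambda_def by simp
    moreover have "ereal (h * mu) \<le> Lambda N h" by (rule ge)
    ultimately show "Lambda N h = ereal (F h)" and "h * mu \<le> F h"
      unfolding F_def Lambda_real_def by (cases "Lambda N h"; auto)+
  qed
  have "F differentiable (at 0)"
    using A3 A2 unfolding assumption3_def steep_def assumption2_def F_def by blast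
  then obtain D where D: "(F has_real_derivative D) (at 0)"
    using real_differentiable_def by blast
  have F0: "F 0 = 0" using L0 unfolding F_def Lambda_real_def by simp
  have df: "(\<forall>c<mu. \<exists>h. -e < h \<and> h < 0 \<and> F h < h * c) \<and> (\<forall>c>mu. \<exists>h. 0 < h \<and> h < e \<and> F h < h * c)"
    by (rule deriv_facts[OF D F0 e(1)]) (rule lbF)
  show "\<exists>d>0. \<forall>x\<le>c. ereal d \<le> rate N x" if cc: "c < mu" for c
  proof -
    obtain h where h: "-e < h" "h < 0" "F h < h * c" using df cc by blast
    have "ereal (h * c - F h) \<le> rate N x" if "x \<le> c" for x
    proof -
      have "ereal (h * c - F h) \<le> ereal (h * x) - Lambda N h"
        using fin[of h] h that by (simp add: mult_left_mono_neg)
      also have "\<dots> \<le> rate N x" unfolding rate_def by (rule SUP_upper) auto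
      finally show ?thesis .
    qed
    then show ?thesis using h by (intro exI[of _ "h * c - F h"]) auto
  qed
  show "\<exists>d>0. \<forall>x\<ge>c. ereal d \<le> rate N x" if cc: "c > mu" for c
  proof -
    obtain h where h: "0 < h" "h < e" "F h < h * c" using df cc by blast
    have "ereal (h * c - F h) \<le> rate N x" if "x \<ge> c" for x
    proof -
      have "ereal (h * c - F h) \<le> ereal (h * x) - Lambda N h"
        using fin[of h] h that by (simp add: mult_left_mono)
      also have "\<dots> \<le> rate N x" unfolding rate_def by (rule SUP_upper) auto
      finally show ?thesis .
    qed
    then show ?thesis using h by (intro exI[of _ "h * c - F h"]) auto
  qed
qed


definition GG :: "(real \<Rightarrow> ereal) \<Rightarrow> (real \<Rightarrow> ereal) \<Rightarrow> real \<Rightarrow> real \<Rightarrow> ereal" where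
  "GG f g a b = (INF x. ereal a * f x + ereal b * g x)"

lemma G_GG: "G M i j a b = GG (rate (M i)) (rate (M j)) a b"
  unfolding G_def GG_def ..

context
  fixes f g :: "real \<Rightarrow> ereal"
  assumes fnn: "\<And>x. 0 \<le> f x" and gnn: "\<And>x. 0 \<le> g x"
begin

lemma GG_nonneg: "0 \<le> a \<Longrightarrow> 0 \<le> b \<Longrightarrow> 0 \<le> GG f g a b"
  unfolding GG_def by (rule INF_greatest) (simp add: fnn gnn)

lemma GG_mono: "0 \<le> a \<Longrightarrow> a \<le> a' \<Longrightarrow> 0 \<le> b \<Longrightarrow> b \<le> b' \<Longrightarrow> GG f g a b \<le> GG f g a' b'"
  unfolding GG_def
  by (intro INF_mono' add_mono ereal_mult_right_mono) (auto simp: fnn gnn)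

lemma GG_hom:
  assumes t: "0 < t" and a: "0 \<le> a" and b: "0 \<le> b"
  shows "ereal t * GG f g a b \<le> GG f g (t * a) (t * b)"
  unfolding GG_def
proof (rule INF_greatest)
  fix x
  have "ereal t * (INF x. ereal a * f x + ereal b * g x) \<le> ereal t * (ereal a * f x + ereal b * g x)"
    using t by (intro ereal_mult_left_mono INF_lower) auto
  also have "\<dots> = ereal (t * a) * f x + ereal (t * b) * g x"
  proof -
    have "ereal t * (ereal a * f x + ereal b * g x) = ereal t * (ereal a * f x) + ereal t * (ereal b * g x)"
      using a b by (intro ereal_right_distrib) (auto simp: fnn gnn)
    also have "\<dots> = ereal (t * a) * f x + ereal (t * b) * g x"
      by (metis mult.assoc times_ereal.simps(1))
    finally show ?thesis .
  qed
  finally show "ereal t * (INF x. ereal a * f x + ereal b * g x) \<le> ereal (t * a) * f x + ereal (t * b) * g x" .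
qed

lemma GG_zero1: "g y \<le> 0 \<Longrightarrow> 0 \<le> b \<Longrightarrow> GG f g 0 b \<le> 0"
  unfolding GG_def
proof -
  assume "g y \<le> 0" "0 \<le> b"
  then have "g y = 0" using gnn[of y] by auto
  then have "ereal 0 * f y + ereal b * g y = 0" by simp
  then show "(INF x. ereal 0 * f x + ereal b * g x) \<le> 0" using INF_lower[OF UNIV_I, of "\<lambda>x. ereal 0 * f x + ereal b * g x" y] by simp
qed

lemma GG_zero2: "f y \<le> 0 \<Longrightarrow> 0 \<le> a \<Longrightarrow> GG f g a 0 \<le> 0"
  unfolding GG_def
proof -
  assume "f y \<le> 0" "0 \<le> a"
  then have "f y = 0" using fnn[of y] by auto
  then have "ereal a * f y + ereal 0 * g y = 0" by simp
  then show "(INF x. ereal a * f x + ereal 0 * g x) \<le> 0" using INF_lower[OF UNIV_I, of "\<lambda>x. ereal a * f x + ereal 0 * g x" y] by simp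
qed

lemma GG_pos:
  assumes d1: "d1 > 0" "\<And>x. x \<le> c \<Longrightarrow> ereal d1 \<le> f x"
    and d2: "d2 > 0" "\<And>x. x \<ge> c \<Longrightarrow> ereal d2 \<le> g x"
    and a: "a > 0" and b: "b > 0"
  shows "0 < GG f g a b"
proof -
  have "ereal (min (a * d1) (b * d2)) \<le> ereal a * f x + ereal b * g x" for x
  proof (cases "x \<le> c")
    case True
    have "ereal (min (a * d1) (b * d2)) \<le> ereal a * ereal d1" by simp
    also have "\<dots> \<le> ereal a * f x" using a d1 True by (intro ereal_mult_left_mono) auto
    also have "\<dots> \<le> ereal a * f x + ereal b * g x" using b gnn[of x] by (simp add: add_increasing2)
    finally show ?thesis .
  next
    case False
    have "ereal (min (a * d1) (b * d2)) \<le> ereal b * ereal d2" by simp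
    also have "\<dots> \<le> ereal b * g x" using b d2 False by (intro ereal_mult_left_mono) auto
    also have "\<dots> \<le> ereal a * f x + ereal b * g x" using a fnn[of x] by (simp add: add_increasing)
    finally show ?thesis .
  qed
  then have le: "ereal (min (a * d1) (b * d2)) \<le> GG f g a b" unfolding GG_def by (rule INF_greatest)
  have "0 < ereal (min (a * d1) (b * d2))" using a b d1 d2 by simp
  then show ?thesis using le by (rule order_less_le_trans)
qed

end



lemma abstract_opt:
  fixes g :: "nat \<Rightarrow> nat \<Rightarrow> real \<Rightarrow> real \<Rightarrow> ereal" and k m s :: nat and r :: "nat \<Rightarrow> real"
  defines "P \<equiv> {1..m} \<times> {m+1..k}"
  defines "obj \<equiv> (\<lambda>r'. INF p\<in>P. g (fst p) (snd p) (r' (fst p)) (r' (snd p)))"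
  assumes km: "1 \<le> m" "m < k"
    and nn: "\<And>i j a b. i \<in> {1..m} \<Longrightarrow> j \<in> {m+1..k} \<Longrightarrow> 0 \<le> a \<Longrightarrow> 0 \<le> b \<Longrightarrow> 0 \<le> g i j a b"
    and mono: "\<And>i j a b a' b'. i \<in> {1..m} \<Longrightarrow> j \<in> {m+1..k} \<Longrightarrow> 0 \<le> a \<Longrightarrow> a \<le> a' \<Longrightarrow> 0 \<le> b \<Longrightarrow> b \<le> b'
                 \<Longrightarrow> g i j a b \<le> g i j a' b'"
    and hom: "\<And>i j t a b. i \<in> {1..m} \<Longrightarrow> j \<in> {m+1..k} \<Longrightarrow> 0 < t \<Longrightarrow> 0 \<le> a \<Longrightarrow> 0 \<le> b
                 \<Longrightarrow> ereal t * g i j a b \<le> g i j (t * a) (t * b)"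
    and z1: "\<And>i j b. i \<in> {1..m} \<Longrightarrow> j \<in> {m+1..k} \<Longrightarrow> 0 \<le> b \<Longrightarrow> g i j 0 b \<le> 0"
    and z2: "\<And>i j a. i \<in> {1..m} \<Longrightarrow> j \<in> {m+1..k} \<Longrightarrow> 0 \<le> a \<Longrightarrow> g i j a 0 \<le> 0"
    and pos: "\<And>i j a b. i \<in> {1..m} \<Longrightarrow> j \<in> {m+1..k} \<Longrightarrow> 0 < a \<Longrightarrow> 0 < b \<Longrightarrow> 0 < g i j a b"
    and r: "r \<in> alloc_simplex k"
    and opt: "\<And>r'. r' \<in> alloc_simplex k \<Longrightarrow> obj r' \<le> obj r"
    and s: "s \<in> {1..k}"
    and VW: "obj r < W"
    and Wle: "\<And>p. p \<in> P \<Longrightarrow> fst p = s \<or> snd p = s \<Longrightarrow> W \<le> g (fst p) (snd p) (r (fst p)) (r (snd p))"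
  shows False
proof -
  have finP: "finite P" and neP: "P \<noteq> {}" using km unfolding P_def by auto
  have rnn: "\<And>l. l \<in> {1..k} \<Longrightarrow> 0 \<le> r l" and rsum: "(\<Sum>l=1..k. r l) = 1"
    using r unfolding alloc_simplex_def by auto
  have Pk: "\<And>p. p \<in> P \<Longrightarrow> fst p \<in> {1..m} \<and> snd p \<in> {m+1..k} \<and> fst p \<in> {1..k} \<and> snd p \<in> {1..k}"
    unfolding P_def using km by auto
  have V0: "0 \<le> obj r" unfolding obj_def
    by (rule INF_greatest) (use Pk rnn nn in auto)
  have Vfin: "obj r \<noteq> \<infinity>" using VW by auto
  obtain v where v: "obj r = ereal v" "0 \<le> v" using V0 Vfin by (cases "obj r") auto
  define ps where "ps = (if s \<le> m then (s, k) else (1, s))"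
  have ps: "ps \<in> P" "fst ps = s \<or> snd ps = s" using s km unfolding ps_def P_def by auto
  have rs: "0 < r s"
  proof (rule ccontr)
    assume "\<not> 0 < r s"
    then have "r s = 0" using rnn[OF s] by auto
    then have "g (fst ps) (snd ps) (r (fst ps)) (r (snd ps)) \<le> 0"
      using Pk[OF ps(1)] rnn z1 z2 ps(2) by (cases "fst ps = s") auto
    then show False using Wle[OF ps] VW V0 by auto
  qed
  obtain t where t: "0 < t" "t < 1" "ereal v < ereal t * W"
  proof (cases W)
    case (real w)
    then have "v < w" using VW v by auto
    define t where "t = (w + v) / (2 * w)"
    have "0 < w" using \<open>v < w\<close> v by auto
    then have "0 < t" "t < 1" "t * w = (w + v) / 2" using \<open>v < w\<close> v unfolding t_def by (auto simp: field_simps)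
    then show ?thesis using that[of t] real \<open>v < w\<close> by auto
  next
    case PInf
    then show ?thesis using that[of "1/2"] by auto
  next
    case MInf
    then show ?thesis using VW V0 by auto
  qed
  have k2: "k \<ge> 2" using km by auto
  define d where "d = (1 - t) * r s / (real k - 1)"
  have d: "0 < d" using t rs k2 unfolding d_def by auto
  define r' where "r' = (\<lambda>l. if l = s then t * r s else r l + d)"
  have cardrest: "card ({1..k} - {s}) = k - 1" using s by auto
  have "(\<Sum>l=1..k. r' l) = r' s + (\<Sum>l\<in>{1..k} - {s}. r' l)"
    using s by (simp add: sum.remove)
  also have "(\<Sum>l\<in>{1..k} - {s}. r' l) = (\<Sum>l\<in>{1..k} - {s}. r l) + (real k - 1) * d"
    using cardrest k2 by (simp add: r'_def sum.distrib of_nat_diff)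
  also have "(\<Sum>l\<in>{1..k} - {s}. r l) = 1 - r s"
    using s rsum by (simp add: sum.remove)
  also have "(real k - 1) * d = (1 - t) * r s" using k2 unfolding d_def by auto
  finally have "(\<Sum>l=1..k. r' l) = 1" unfolding r'_def by (simp add: algebra_simps)
  moreover have "\<forall>l\<in>{1..k}. 0 \<le> r' l" using rnn t d rs unfolding r'_def by auto
  ultimately have r'A: "r' \<in> alloc_simplex k" unfolding alloc_simplex_def by auto
  have r'ge: "t * r l \<le> r' l" if "l \<in> {1..k}" for l
  proof -
    have "t * r l \<le> r l" using t rnn[OF that] by (simp add: mult_left_le_one_le)
    then show ?thesis unfolding r'_def using d by auto
  qed
  have better: "obj r < g (fst p) (snd p) (r' (fst p)) (r' (snd p))" if p: "p \<in> P" for p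
  proof -
    define i j where "i = fst p" and "j = snd p"
    have ij: "i \<in> {1..m}" "j \<in> {m+1..k}" "i \<in> {1..k}" "j \<in> {1..k}" using Pk[OF p] unfolding i_def j_def by auto
    show ?thesis
    proof (cases "i = s \<or> j = s")
      case True
      have "ereal v < ereal t * W" by (rule t(3))
      also have "\<dots> \<le> ereal t * g i j (r i) (r j)"
        using Wle[OF p] True t unfolding i_def j_def by (intro ereal_mult_left_mono) auto
      also have "\<dots> \<le> g i j (t * r i) (t * r j)" using hom ij t rnn by auto
      also have "\<dots> \<le> g i j (r' i) (r' j)"
        using mono[OF ij(1,2)] r'ge ij rnn t by (simp add: zero_le_mult_iff)
      finally show ?thesis unfolding i_def j_def v by simp
    next
      case False
      then have r'ij: "r' i = r i + d" "r' j = r j + d" unfolding r'_def by auto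
      show ?thesis
      proof (cases "v = 0")
        case True
        have "0 < g i j (r' i) (r' j)" using pos[OF ij(1,2)] r'ij rnn ij d
          by (metis add_nonneg_pos)
        then show ?thesis unfolding i_def j_def v True by (simp add: zero_ereal_def)
      next
        case False
        then have vpos: "0 < v" using v by auto
        have gr: "ereal v \<le> g i j (r i) (r j)"
          unfolding v(1)[symmetric] obj_def i_def j_def using p by (rule INF_lower)
        have ri: "0 < r i"
        proof (rule ccontr)
          assume "\<not> 0 < r i" then have "r i = 0" using rnn[OF ij(3)] by linarith
          then have "ereal v \<le> 0" using z1[OF ij(1,2) rnn[OF ij(4)]] gr by (metis order_trans)
          then show False using vpos by simp
        qed
        have rj: "0 < r j"
        proof (rule ccontr)
          assume "\<not> 0 < r j" then have "r j = 0" using rnn[OF ij(4)] by linarith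
          then have "ereal v \<le> 0" using z2[OF ij(1,2) rnn[OF ij(3)]] gr by (metis order_trans)
          then show False using vpos by simp
        qed
        define t2 where "t2 = min ((r i + d) / r i) ((r j + d) / r j)"
        have t2: "1 < t2" using ri rj d unfolding t2_def by (auto simp: field_simps)
        have t2i: "t2 * r i \<le> r i + d"
        proof -
          have "t2 \<le> (r i + d) / r i" unfolding t2_def by simp
          then have "t2 * r i \<le> (r i + d) / r i * r i" using ri by (intro mult_right_mono) auto
          then show ?thesis using ri by simp
        qed
        have t2j: "t2 * r j \<le> r j + d"
        proof -
          have "t2 \<le> (r j + d) / r j" unfolding t2_def by simp
          then have "t2 * r j \<le> (r j + d) / r j * r j" using rj by (intro mult_right_mono) auto
          then show ?thesis using rj by simp
        qed
        have "ereal v < ereal (t2 * v)" using t2 vpos by simp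
        also have "\<dots> = ereal t2 * ereal v" by simp
        also have "\<dots> \<le> ereal t2 * g i j (r i) (r j)" using gr t2 by (intro ereal_mult_left_mono) auto
        also have "\<dots> \<le> g i j (t2 * r i) (t2 * r j)" using hom ij t2 ri rj by auto
        also have "\<dots> \<le> g i j (r' i) (r' j)"
          using mono[OF ij(1,2)] t2i t2j ri rj t2 r'ij by simp
        finally show ?thesis unfolding i_def j_def v by simp
      qed
    qed
  qed
  have "obj r < obj r'" unfolding obj_def
    using finP neP better
    by (subst finite_less_Inf_iff) (auto simp: obj_def)
  with opt[OF r'A] show False by simp
qed


theorem corollary1:
  fixes M :: "nat \<Rightarrow> real measure" and k m :: nat and rstar :: "nat \<Rightarrow> real"
  assumes "k \<ge> 2" and "1 \<le> m" and "m < k"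
    and prob: "\<And>l. l \<in> {1..k} \<Longrightarrow> prob_space (M l)"
    and borel: "\<And>l. l \<in> {1..k} \<Longrightarrow> sets (M l) = sets borel"
    and integ: "\<And>l. l \<in> {1..k} \<Longrightarrow> integrable (M l) (\<lambda>x. x)"
    and ordered: "\<And>i j. i \<in> {1..k} \<Longrightarrow> j \<in> {1..k} \<Longrightarrow> i < j \<Longrightarrow>
                    (\<integral>x. x \<partial>M j) < (\<integral>x. x \<partial>M i)"
    and A1: "\<And>l. l \<in> {1..k} \<Longrightarrow> assumption1 (M l)"
    and A2: "\<And>l. l \<in> {1..k} \<Longrightarrow> assumption2 (M l)"
    and A3: "\<And>l. l \<in> {1..k} \<Longrightarrow> assumption3 (M l)"
    and A4: "{(\<integral>x. x \<partial>M k) .. (\<integral>x. x \<partial>M 1)} \<subseteq> (\<Inter>l\<in>{1..k}. interior (F_set (M l)))"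
    and feas: "rstar \<in> alloc_simplex k"
    and opt: "\<And>r. r \<in> alloc_simplex k \<Longrightarrow> objective M k m r \<le> objective M k m rstar"
    and h: "h \<in> {1..m}" and l: "l \<in> {m+1..k}"
  shows "(INF j\<in>{m+1..k}. G M h j (rstar h) (rstar j)) =
         (INF i\<in>{1..m}. G M i l (rstar i) (rstar l))"
proof -
  define P where "P = {1..m} \<times> {m+1..k}"
  define obj where "obj = (\<lambda>r'. INF p\<in>P. G M (fst p) (snd p) (r' (fst p)) (r' (snd p)))"
  have objeq: "\<And>r. objective M k m r = obj r" unfolding objective_def obj_def P_def ..
  have idx: "\<And>l. l \<in> {1..m} \<Longrightarrow> l \<in> {1..k}" "\<And>l. l \<in> {m+1..k} \<Longrightarrow> l \<in> {1..k}"
    using \<open>m < k\<close> by auto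
  have rnn: "0 \<le> rate (M l) x" if "l \<in> {1..k}" for l x
    using rate_facts(1)[OF prob[OF that] borel[OF that] integ[OF that] A2[OF that] A3[OF that]] .
  have RF2: "rate (M l) (\<integral>x. x \<partial>M l) \<le> 0" if "l \<in> {1..k}" for l
    using rate_facts(2)[OF prob[OF that] borel[OF that] integ[OF that] A2[OF that] A3[OF that]] .
  have RF3: "\<exists>d>0. \<forall>x\<le>c. ereal d \<le> rate (M l) x" if "l \<in> {1..k}" "c < (\<integral>x. x \<partial>M l)" for l c
    using rate_facts(3)[OF prob[OF that(1)] borel[OF that(1)] integ[OF that(1)] A2[OF that(1)] A3[OF that(1)] that(2)] .
  have RF4: "\<exists>d>0. \<forall>x\<ge>c. ereal d \<le> rate (M l) x" if "l \<in> {1..k}" "c > (\<integral>x. x \<partial>M l)" for l c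
    using rate_facts(4)[OF prob[OF that(1)] borel[OF that(1)] integ[OF that(1)] A2[OF that(1)] A3[OF that(1)] that(2)] .
  have nn: "\<And>i j a b. i \<in> {1..m} \<Longrightarrow> j \<in> {m+1..k} \<Longrightarrow> 0 \<le> a \<Longrightarrow> 0 \<le> b \<Longrightarrow> 0 \<le> G M i j a b"
    unfolding G_GG by (rule GG_nonneg) (auto intro: rnn idx)
  have mono: "\<And>i j a b a' b'. i \<in> {1..m} \<Longrightarrow> j \<in> {m+1..k} \<Longrightarrow> 0 \<le> a \<Longrightarrow> a \<le> a' \<Longrightarrow> 0 \<le> b \<Longrightarrow> b \<le> b'
                 \<Longrightarrow> G M i j a b \<le> G M i j a' b'"
    unfolding G_GG by (rule GG_mono) (auto intro: rnn idx)
  have hom: "\<And>i j t a b. i \<in> {1..m} \<Longrightarrow> j \<in> {m+1..k} \<Longrightarrow> 0 < t \<Longrightarrow> 0 \<le> a \<Longrightarrow> 0 \<le> b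
                 \<Longrightarrow> ereal t * G M i j a b \<le> G M i j (t * a) (t * b)"
    unfolding G_GG by (rule GG_hom) (auto intro: rnn idx)
  have z1: "\<And>i j b. i \<in> {1..m} \<Longrightarrow> j \<in> {m+1..k} \<Longrightarrow> 0 \<le> b \<Longrightarrow> G M i j 0 b \<le> 0"
    unfolding G_GG by (rule GG_zero1) (auto intro: rnn idx RF2)
  have z2: "\<And>i j a. i \<in> {1..m} \<Longrightarrow> j \<in> {m+1..k} \<Longrightarrow> 0 \<le> a \<Longrightarrow> G M i j a 0 \<le> 0"
    unfolding G_GG by (rule GG_zero2) (auto intro: rnn idx RF2)
  have pos: "\<And>i j a b. i \<in> {1..m} \<Longrightarrow> j \<in> {m+1..k} \<Longrightarrow> 0 < a \<Longrightarrow> 0 < b \<Longrightarrow> 0 < G M i j a b"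
  proof -
    fix i j :: nat and a b :: real assume ij: "i \<in> {1..m}" "j \<in> {m+1..k}" and ab: "0 < a" "0 < b"
    define c where "c = ((\<integral>x. x \<partial>M i) + (\<integral>x. x \<partial>M j)) / 2"
    have lt: "(\<integral>x. x \<partial>M j) < (\<integral>x. x \<partial>M i)" using ordered[OF idx(1)[OF ij(1)] idx(2)[OF ij(2)]] ij by auto
    have "\<exists>d>0. \<forall>x\<le>c. ereal d \<le> rate (M i) x"
      by (rule RF3[OF idx(1)[OF ij(1)]]) (use lt in \<open>simp add: c_def\<close>)
    then obtain d1 where d1: "d1 > 0" "\<forall>x\<le>c. ereal d1 \<le> rate (M i) x" by blast
    have "\<exists>d>0. \<forall>x\<ge>c. ereal d \<le> rate (M j) x"
      by (rule RF4[OF idx(2)[OF ij(2)]]) (use lt in \<open>simp add: c_def\<close>)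
    then obtain d2 where d2: "d2 > 0" "\<forall>x\<ge>c. ereal d2 \<le> rate (M j) x" by blast
    show "0 < G M i j a b" unfolding G_GG
      by (rule GG_pos[OF _ _ d1(1) _ d2(1)]) (use d1 d2 ab ij in \<open>auto intro: rnn idx\<close>)
  qed
  have AO: "False" if s: "s \<in> {1..k}" and VW: "obj rstar < W"
    and Wle: "\<And>p. p \<in> P \<Longrightarrow> fst p = s \<or> snd p = s \<Longrightarrow> W \<le> G M (fst p) (snd p) (rstar (fst p)) (rstar (snd p))"
    for s W
    by (rule abstract_opt[of m k "G M" rstar s W, OF \<open>1 \<le> m\<close> \<open>m < k\<close> nn mono hom z1 z2 pos feas _ s])
       (use opt VW Wle in \<open>auto simp: objeq obj_def P_def\<close>)
  have hk: "h \<in> {1..k}" "l \<in> {1..k}" using idx h l by auto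
  have rowge: "obj rstar \<le> (INF j\<in>{m+1..k}. G M h j (rstar h) (rstar j))"
    unfolding obj_def P_def
  proof (rule INF_greatest)
    fix j assume j: "j \<in> {m+1..k}"
    have "(h, j) \<in> {1..m} \<times> {m+1..k}" using h j by auto
    from INF_lower[OF this, of "\<lambda>p. G M (fst p) (snd p) (rstar (fst p)) (rstar (snd p))"]
    show "(INF p\<in>{1..m} \<times> {m+1..k}. G M (fst p) (snd p) (rstar (fst p)) (rstar (snd p))) \<le> G M h j (rstar h) (rstar j)" by simp
  qed
  have colge: "obj rstar \<le> (INF i\<in>{1..m}. G M i l (rstar i) (rstar l))"
    unfolding obj_def P_def
  proof (rule INF_greatest)
    fix i assume i: "i \<in> {1..m}"
    have "(i, l) \<in> {1..m} \<times> {m+1..k}" using i l by auto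
    from INF_lower[OF this, of "\<lambda>p. G M (fst p) (snd p) (rstar (fst p)) (rstar (snd p))"]
    show "(INF p\<in>{1..m} \<times> {m+1..k}. G M (fst p) (snd p) (rstar (fst p)) (rstar (snd p))) \<le> G M i l (rstar i) (rstar l)" by simp
  qed
  have row: "(INF j\<in>{m+1..k}. G M h j (rstar h) (rstar j)) = obj rstar"
  proof (rule ccontr)
    assume "(INF j\<in>{m+1..k}. G M h j (rstar h) (rstar j)) \<noteq> obj rstar"
    then have VW: "obj rstar < (INF j\<in>{m+1..k}. G M h j (rstar h) (rstar j))" using rowge by auto
    show False
    proof (rule AO[OF hk(1) VW])
      fix p assume p: "p \<in> P" "fst p = h \<or> snd p = h"
      then have "fst p = h" "snd p \<in> {m+1..k}" using h unfolding P_def by auto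
      then show "(INF j\<in>{m+1..k}. G M h j (rstar h) (rstar j)) \<le> G M (fst p) (snd p) (rstar (fst p)) (rstar (snd p))"
        by (auto intro: INF_lower)
    qed
  qed
  have col: "(INF i\<in>{1..m}. G M i l (rstar i) (rstar l)) = obj rstar"
  proof (rule ccontr)
    assume "(INF i\<in>{1..m}. G M i l (rstar i) (rstar l)) \<noteq> obj rstar"
    then have VW: "obj rstar < (INF i\<in>{1..m}. G M i l (rstar i) (rstar l))" using colge by auto
    show False
    proof (rule AO[OF hk(2) VW])
      fix p assume p: "p \<in> P" "fst p = l \<or> snd p = l"
      then have "snd p = l" "fst p \<in> {1..m}" using l unfolding P_def by auto
      then show "(INF i\<in>{1..m}. G M i l (rstar i) (rstar l)) \<le> G M (fst p) (snd p) (rstar (fst p)) (rstar (snd p))"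
        by (auto intro: INF_lower)
    qed
  qed
  show ?thesis using row col by simp
qed

end
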